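(* Let $F$ be a Legendre function, $\pi_0\in\Pi_{\mathrm{all}}$, and $\Pi\subseteq\Pi_{\mathrm{all}}$ closed and convex. Suppose a mechanism produces $\widehat\pi_F\in\Pi$ such that for every $\pi^*\in\Pi$, $$\mathbb{E}[\mathsf{B}_F(\pi^*(x)\parallel\widehat\pi_F(x))]\le\mathbb{E}[\mathsf{B}_F(\pi^*(x)\parallel\pi_0(x))]-\mathbb{E}[\mathsf{B}_F(\widehat\pi_F(x)\parallel\pi_0(x))],$$ and assume that almost everywhere the relevant values lie in the interior of the domain of $F$. Let $\{\mathcal{X}_i\}_{i\in I}$ be the partition of $\mathcal{X}$ given by $x\sim x'\iff\widehat\pi_F(x)=\widehat\pi_F(x')$ and $\mathcal{C}_F=\{\pi\in\Pi:\pi(x)=\pi(x')\ \forall x,x'\in\mathcal{X}_i,\ \forall i\in I\}$. Then $\widehat\pi_F=\arg\min_{\pi\in\Pi\cap\mathcal{C}_F}\mathbb{E}[\mathsf{B}_F(\pi(x)\parallel\pi_0(x))]$, i.e., $\widehat\pi_F$ is the unique Bregman projection of $\pi_0$ onto $\Pi\cap\mathcal{C}_F$.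
   Context: $\mathcal{X},\mathcal{Y}$ finite; $\Pi_{\mathrm{all}}=\Delta(\mathcal{Y})^{\mathcal{X}}$; $\mathcal{D}_{\mathcal{X}}$ full-support distribution on $\mathcal{X}$ and $\mathbb{E}=\mathbb{E}_{x\sim\mathcal{D}_{\mathcal{X}}}$. $\mathsf{B}_F(p\parallel q)=F(p)-F(q)-\langle\nabla F(q),p-q\rangle$. A Legendre function is proper, closed, convex, differentiable on the interior $\Omega$ of its domain, with $\nabla F\colon\Omega\to\mathrm{int}(\mathrm{dom}F^* )$ a bijection. *)

theory Defs
  imports "HOL-Analysis.Analysis"
begin

text \<open>A function F with effective domain D (= dom F) is represented by a real-valued
  function together with the set D; values of F outside D are irrelevant.\<close>

definition prob_simplex :: "(real^'y::finite) set" where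
  "prob_simplex = {p. (\<forall>y. 0 \<le> p $ y) \<and> (\<Sum>y\<in>UNIV. p $ y) = 1}"

definition Pi_all :: "(real^'y::finite^'x::finite) set" where
  "Pi_all = {\<pi>. \<forall>x. \<pi> $ x \<in> prob_simplex}"

definition grad :: "(real^'n::finite \<Rightarrow> real) \<Rightarrow> real^'n \<Rightarrow> real^'n" where
  "grad F q = (SOME g. (F has_derivative (\<lambda>h. g \<bullet> h)) (at q))"

text \<open>Effective domain of the convex conjugate F^*(u) = sup_{p in D} (u.p - F p).\<close>
definition conj_dom :: "(real^'n::finite \<Rightarrow> real) \<Rightarrow> (real^'n) set \<Rightarrow> (real^'n) set" where
  "conj_dom F D = {u. bdd_above ((\<lambda>p. u \<bullet> p - F p) ` D)}"

definition legendre :: "(real^'n::finite \<Rightarrow> real) \<Rightarrow> (real^'n) set \<Rightarrow> bool" where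
  "legendre F D \<longleftrightarrow>
     D \<noteq> {} \<and> convex D \<and> convex_on D F \<and>
     closed {(p, t). p \<in> D \<and> F p \<le> t} \<and>
     (\<forall>q\<in>interior D. F differentiable (at q)) \<and>
     bij_betw (grad F) (interior D) (interior (conj_dom F D))"

definition bregman :: "(real^'n::finite \<Rightarrow> real) \<Rightarrow> real^'n \<Rightarrow> real^'n \<Rightarrow> real" where
  "bregman F p q = F p - F q - grad F q \<bullet> (p - q)"

text \<open>Expectation over x ~ D_X, with D_X given by its probability weights w.\<close>
definition expect :: "('x::finite \<Rightarrow> real) \<Rightarrow> ('x \<Rightarrow> real) \<Rightarrow> real" where
  "expect w f = (\<Sum>x\<in>UNIV. w x * f x)"

definition CF :: "(real^'y::finite^'x::finite) set \<Rightarrow> real^'y^'x \<Rightarrow> (real^'y^'x) set" where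
  "CF PP pihat = {\<pi>\<in>PP. \<forall>x x'. pihat $ x = pihat $ x' \<longrightarrow> \<pi> $ x = \<pi> $ x'}"

end

theory Submission
  imports Defs
begin

lemma lin_rep: fixes f :: "real^'n::finite \<Rightarrow> real" assumes "linear f"
  shows "\<exists>v. f = (\<lambda>h. v \<bullet> h)"
  by (metis adjoint_adjoint adjoint_linear adjoint_works assms real_inner_1_left)

lemma grad_works:
  fixes F :: "real^'n::finite \<Rightarrow> real"
  assumes "F differentiable (at q)"
  shows "(F has_derivative (\<lambda>h. grad F q \<bullet> h)) (at q)"
proof -
  obtain f' where f': "(F has_derivative f') (at q)" using assms differentiable_def by blast
  then have "linear f'" using has_derivative_linear by blast
  then obtain v where "f' = (\<lambda>h. v \<bullet> h)" using lin_rep by blast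
  then have "\<exists>g. (F has_derivative (\<lambda>h. g \<bullet> h)) (at q)" using f' by blast
  then show ?thesis unfolding grad_def by (rule someI_ex)
qed

lemma inner_fun_eq:
  fixes g v :: "real^'n::finite"
  assumes "(\<lambda>h. g \<bullet> h) = (\<lambda>h. v \<bullet> h)" shows "g = v"
proof -
  have "g \<bullet> (g - v) = v \<bullet> (g - v)" using assms by metis
  then have "(g - v) \<bullet> (g - v) = 0" by (simp add: inner_diff_left)
  then show ?thesis by simp
qed

lemma tangent:
  fixes F :: "real^'n::finite \<Rightarrow> real"
  assumes leg: "legendre F D" and q: "q \<in> interior D" and p: "p \<in> D"
  shows "grad F q \<bullet> (p - q) \<le> F p - F q"
proof -
  define d where "d = p - q"
  define A where "A = {t::real. q + t *\<^sub>R d \<in> D}"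
  define \<phi> where "\<phi> = (\<lambda>t::real. F (q + t *\<^sub>R d))"
  have cD: "convex D" and cF: "convex_on D F" and dif: "F differentiable (at q)"
    using leg q unfolding legendre_def by auto
  have aff: "q + (u * t + v * s) *\<^sub>R d = u *\<^sub>R (q + t *\<^sub>R d) + v *\<^sub>R (q + s *\<^sub>R d)"
    if "u + v = 1" for u v t s
  proof -
    have "q = u *\<^sub>R q + v *\<^sub>R q" using that by (metis scaleR_add_left scaleR_one)
    then show ?thesis by (simp add: algebra_simps)
  qed
  have cA: "convex A"
    unfolding convex_def A_def
  proof (intro ballI allI impI, clarify)
    fix t s u v :: real assume "q + t *\<^sub>R d \<in> D" "q + s *\<^sub>R d \<in> D" "0 \<le> u" "0 \<le> v" "u + v = 1"
    then show "q + (u *\<^sub>R t + v *\<^sub>R s) *\<^sub>R d \<in> D"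
      using aff[of u v t s] cD unfolding convex_def by simp
  qed
  have cphi: "convex_on A \<phi>"
    unfolding convex_on_def
  proof (intro conjI cA ballI allI impI)
    fix t s u v :: real assume ts: "t \<in> A" "s \<in> A" and uv: "0 \<le> u" "0 \<le> v" "u + v = 1"
    have "\<phi> (u *\<^sub>R t + v *\<^sub>R s) = F (u *\<^sub>R (q + t *\<^sub>R d) + v *\<^sub>R (q + s *\<^sub>R d))"
      unfolding \<phi>_def using aff[OF uv(3)] by simp
    also have "\<dots> \<le> u * F (q + t *\<^sub>R d) + v * F (q + s *\<^sub>R d)"
      using cF ts uv unfolding A_def convex_on_def by auto
    finally show "\<phi> (u *\<^sub>R t + v *\<^sub>R s) \<le> u * \<phi> t + v * \<phi> s" unfolding \<phi>_def by simp
  qed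
  have "open {t::real. q + t *\<^sub>R d \<in> interior D}"
    by (intro continuous_open_vimage[unfolded vimage_def]) (auto intro!: continuous_intros)
  moreover have "{t::real. q + t *\<^sub>R d \<in> interior D} \<subseteq> A"
    unfolding A_def using interior_subset by blast
  ultimately have "{t::real. q + t *\<^sub>R d \<in> interior D} \<subseteq> interior A"
    by (rule interior_maximal[rotated])
  then have i0: "0 \<in> interior A" using q by auto
  have lin: "((\<lambda>t::real. q + t *\<^sub>R d) has_derivative (\<lambda>t. t *\<^sub>R d)) (at 0)"
    by (intro derivative_eq_intros) auto
  then have "(\<phi> has_derivative (\<lambda>t. grad F q \<bullet> (t *\<^sub>R d))) (at 0)"
  proof -
    have g: "(F has_derivative (\<lambda>h. grad F q \<bullet> h)) (at (q + (0::real) *\<^sub>R d))"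
      using grad_works[OF dif] by simp
    show ?thesis unfolding \<phi>_def by (rule has_derivative_compose[OF lin g])
  qed
  then have "(\<phi> has_field_derivative (grad F q \<bullet> d)) (at 0)"
  proof -
    have e: "(\<lambda>t. grad F q \<bullet> (t *\<^sub>R d)) = (*) (grad F q \<bullet> d)" by (auto simp: mult.commute)
    show ?thesis using \<open>(\<phi> has_derivative (\<lambda>t. grad F q \<bullet> (t *\<^sub>R d))) (at 0)\<close>
      unfolding has_field_derivative_def e .
  qed
  then have der: "(\<phi> has_field_derivative (grad F q \<bullet> d)) (at 0 within A)"
    by (rule has_field_derivative_at_within)
  have "1 \<in> A" using p unfolding A_def d_def by simp
  from convex_on_imp_above_tangent[OF cphi convex_connected[OF cA] i0 this der]
  show ?thesis unfolding \<phi>_def d_def by simp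
qed

lemma bregman_nonneg:
  fixes F :: "real^'n::finite \<Rightarrow> real"
  assumes "legendre F D" "q \<in> interior D" "p \<in> D"
  shows "0 \<le> bregman F p q"
  using tangent[OF assms] unfolding bregman_def by simp

lemma bregman_zero:
  fixes F :: "real^'n::finite \<Rightarrow> real"
  assumes leg: "legendre F D" and q: "q \<in> interior D" and p: "p \<in> D"
    and z: "bregman F p q = 0"
  shows "p = q"
proof (rule ccontr)
  assume pq: "p \<noteq> q"
  define d where "d = p - q"
  define g where "g = grad F q"
  have cD: "convex D" and cF: "convex_on D F"
    and difall: "\<forall>q\<in>interior D. F differentiable (at q)"
    and bij: "bij_betw (grad F) (interior D) (interior (conj_dom F D))"
    using leg unfolding legendre_def by auto
  have Fp: "F p = F q + g \<bullet> d" using z unfolding bregman_def g_def d_def by simp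
  have "open {t::real. q + t *\<^sub>R d \<in> interior D}"
    by (intro continuous_open_vimage[unfolded vimage_def]) (auto intro!: continuous_intros)
  moreover have "0 \<in> {t::real. q + t *\<^sub>R d \<in> interior D}" using q by simp
  ultimately obtain e where e: "e > 0" "ball 0 e \<subseteq> {t::real. q + t *\<^sub>R d \<in> interior D}"
    using open_contains_ball by blast
  define t where "t = min (1/2) (e/2)"
  have t: "0 < t" "t < 1" "t < e" using e by (auto simp: t_def)
  define m where "m = q + t *\<^sub>R d"
  have "t \<in> ball 0 e" using t by simp
  then have mi: "m \<in> interior D" using e unfolding m_def by blast
  have dne: "d \<noteq> 0" using pq d_def by simp
  have mq: "m \<noteq> q" using t dne unfolding m_def by simp
  have meq: "m = (1 - t) *\<^sub>R q + t *\<^sub>R p" unfolding m_def d_def by (simp add: algebra_simps)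
  have "F m \<le> (1 - t) * F q + t * F p"
  proof -
    have qD: "q \<in> D" using q interior_subset by blast
    show ?thesis using convex_onD[OF cF, of t q p] qD p t meq by simp
  qed
  then have Fm1: "F m \<le> F q + g \<bullet> (m - q)" using Fp unfolding m_def by (simp add: algebra_simps)
  define h where "h = (\<lambda>z. F z - F q - g \<bullet> (z - q))"
  have hnn: "0 \<le> h z" if "z \<in> D" for z
    using tangent[OF leg q that] unfolding h_def g_def by simp
  have hm: "h m \<le> 0" using Fm1 unfolding h_def by simp
  have "eventually (\<lambda>z. z \<in> interior D) (at m)"
    using mi by (intro eventually_at_in_open') auto
  then have ev: "eventually (\<lambda>z. h m \<le> h z) (at m)"
    by eventually_elim (use hm hnn interior_subset in force)
  have dm: "F differentiable (at m)" using difall mi by blast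
  have "(h has_derivative (\<lambda>k. grad F m \<bullet> k - g \<bullet> k)) (at m)"
    unfolding h_def using grad_works[OF dm]
    by (intro derivative_eq_intros) (auto simp: inner_diff_right)
  from has_derivative_local_min[OF this ev]
  have "(\<lambda>k. grad F m \<bullet> k) = (\<lambda>k. g \<bullet> k)"
    by (metis (no_types, lifting) eq_iff_diff_eq_0)
  then have "grad F m = grad F q" using inner_fun_eq g_def by blast
  moreover have "inj_on (grad F) (interior D)" using bij bij_betw_def by blast
  ultimately show False using mi q mq inj_on_def by metis
qed

theorem theorem16:
  fixes F :: "real^'y::finite \<Rightarrow> real" and D :: "(real^'y) set"
    and w :: "'x::finite \<Rightarrow> real"
    and \<pi>0 pihat :: "real^'y^'x" and PP :: "(real^'y^'x) set"
  assumes leg: "legendre F D"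
    and w_pos: "\<forall>x. 0 < w x" and w_sum: "(\<Sum>x\<in>UNIV. w x) = 1"
    and pi0: "\<pi>0 \<in> Pi_all"
    and Pi_sub: "PP \<subseteq> Pi_all" and Pi_closed: "closed PP" and Pi_convex: "convex PP"
    and pihat_in: "pihat \<in> PP"
    and mech: "\<forall>\<pi>s\<in>PP. expect w (\<lambda>x. bregman F (\<pi>s $ x) (pihat $ x))
                 \<le> expect w (\<lambda>x. bregman F (\<pi>s $ x) (\<pi>0 $ x))
                   - expect w (\<lambda>x. bregman F (pihat $ x) (\<pi>0 $ x))"
    and int_pi0: "\<forall>x. \<pi>0 $ x \<in> interior D"
    and int_pihat: "\<forall>x. pihat $ x \<in> interior D"
    and dom_Pi: "\<forall>\<pi>\<in>PP. \<forall>x. \<pi> $ x \<in> D"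
  shows "pihat \<in> PP \<inter> CF PP pihat
    \<and> (\<forall>\<pi>\<in>PP \<inter> CF PP pihat.
          expect w (\<lambda>x. bregman F (pihat $ x) (\<pi>0 $ x))
            \<le> expect w (\<lambda>x. bregman F (\<pi> $ x) (\<pi>0 $ x)))
    \<and> (\<forall>\<pi>\<in>PP \<inter> CF PP pihat.
          expect w (\<lambda>x. bregman F (\<pi> $ x) (\<pi>0 $ x))
            = expect w (\<lambda>x. bregman F (pihat $ x) (\<pi>0 $ x)) \<longrightarrow> \<pi> = pihat)"
proof -
  have nn: "0 \<le> bregman F (\<pi> $ x) (pihat $ x)" if "\<pi> \<in> PP" for \<pi> x
    using bregman_nonneg[OF leg] int_pihat dom_Pi that by blast
  have E0: "0 \<le> expect w (\<lambda>x. bregman F (\<pi> $ x) (pihat $ x))" if "\<pi> \<in> PP" for \<pi>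
    unfolding expect_def using nn[OF that] w_pos
    by (intro sum_nonneg) (simp add: less_imp_le)
  have A: "pihat \<in> PP \<inter> CF PP pihat" using pihat_in unfolding CF_def by auto
  have B: "expect w (\<lambda>x. bregman F (pihat $ x) (\<pi>0 $ x))
            \<le> expect w (\<lambda>x. bregman F (\<pi> $ x) (\<pi>0 $ x))" if "\<pi> \<in> PP" for \<pi>
    using mech E0[OF that] that by fastforce
  have C: "\<pi> = pihat" if p: "\<pi> \<in> PP" and eq: "expect w (\<lambda>x. bregman F (\<pi> $ x) (\<pi>0 $ x))
            = expect w (\<lambda>x. bregman F (pihat $ x) (\<pi>0 $ x))" for \<pi>
  proof -
    have "expect w (\<lambda>x. bregman F (\<pi> $ x) (pihat $ x)) \<le> 0" using mech p eq by fastforce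
    then have s0: "(\<Sum>x\<in>UNIV. w x * bregman F (\<pi> $ x) (pihat $ x)) = 0"
      using E0[OF p] unfolding expect_def by linarith
    have all0: "\<forall>x\<in>UNIV. w x * bregman F (\<pi> $ x) (pihat $ x) = 0"
    proof -
      have nn2: "\<And>x. x \<in> UNIV \<Longrightarrow> 0 \<le> w x * bregman F (\<pi> $ x) (pihat $ x)"
        using nn[OF p] w_pos by (simp add: less_imp_le)
      show ?thesis using iffD1[OF sum_nonneg_eq_0_iff[OF finite nn2] s0] .
    qed
    have "bregman F (\<pi> $ x) (pihat $ x) = 0" for x
    proof -
      have "w x * bregman F (\<pi> $ x) (pihat $ x) = 0" using all0 by blast
      moreover have "w x \<noteq> 0" using w_pos by (metis less_irrefl)
      ultimately show ?thesis by simp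
    qed
    then have "\<pi> $ x = pihat $ x" for x
      using bregman_zero[OF leg] int_pihat dom_Pi p by blast
    then show ?thesis by (simp add: vec_eq_iff)
  qed
  show ?thesis using A B C by blast
qed

end
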